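(* Suppose Assumptions 1–4 hold and $p$ is convex. Let $$s=\inf\{q\ge0 : p(q)=\min_n C_n'(0)\},\qquad t=\inf\{q\ge0:\ \min_n C_n'(q)\ge p(q)+q\,\partial_+p(q)\}.$$ If $\partial_-p(s)<0$, then every Cournot candidate $\mathbf{x}$ satisfies $\gamma(\mathbf{x})\ge f\big(\partial_+p(t)/\partial_-p(s)\big)$.
   Context: Cournot model: $N$ suppliers, inverse demand $p:[0,\infty)\to[0,\infty)$, supplier $n$ has cost $C_n:[0,\infty)\to[0,\infty)$ and chooses $x_n\ge0$; $X=\sum_n x_n$. $\partial_\pm$ denote right/left derivatives; $C_n'(0)$ is the right derivative at $0$. Assumption 1: each $C_n$ is convex, continuous, nondecreasing on $[0,\infty)$, continuously differentiable on $(0,\infty)$, with $C_n(0)=0$. Assumption 2: $p$ is continuous, nonnegative, nonincreasing, $p(0)>0$; its right derivative at $0$ exists and at every $q>0$ its left and right derivatives exist. Assumption 3: there exists $R>0$ such that $p(R)\le\min_n C_n'(0)$ (this guarantees $s,t$ are finite). Assumption 4: $p(0)>\min_n C_n'(0)$. Social welfare of $\mathbf{x}\ge0$: $W(\mathbf{x})=\int_0^X p(q)\,dq-\sum_{n=1}^N C_n(x_n)$; a social optimum $\mathbf{x}^S$ maximizes $W$. Efficiency: $\gamma(\mathbf{x})=W(\mathbf{x})/W(\mathbf{x}^S)$. A nonnegative vector $\mathbf{x}$ is a Cournot candidate if for every $n$: $C_n'(x_n)\le p(X)+x_n\,\partial_-p(X)$ whenever $x_n>0$, and $C_n'(x_n)\ge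 p(X)+x_n\,\partial_+p(X)$. For $\overline c\ge1$: $f(\overline c)=\dfrac{\phi^2+2}{\phi^2+2\phi+\overline c}$ with $\phi=\max\left\{\dfrac{2-\overline c+\sqrt{\overline c^{\,2}-4\overline c+12}}{2},1\right\}$. *)

theory Defs
  imports "HOL-Analysis.Analysis"
begin

definition rderiv :: "(real \<Rightarrow> real) \<Rightarrow> real \<Rightarrow> real" where
  "rderiv f q = (THE D. (f has_real_derivative D) (at q within {q..}))"

definition lderiv :: "(real \<Rightarrow> real) \<Rightarrow> real \<Rightarrow> real" where
  "lderiv f q = (THE D. (f has_real_derivative D) (at q within {..q}))"

text \<open>Suppliers are indexed by n < N; a production vector is x :: nat => real.\<close>
definition total :: "nat \<Rightarrow> (nat \<Rightarrow> real) \<Rightarrow> real" where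
  "total N x = (\<Sum>n<N. x n)"

definition nonneg_vec :: "nat \<Rightarrow> (nat \<Rightarrow> real) \<Rightarrow> bool" where
  "nonneg_vec N x \<longleftrightarrow> (\<forall>n<N. 0 \<le> x n)"

definition welfare :: "nat \<Rightarrow> (real \<Rightarrow> real) \<Rightarrow> (nat \<Rightarrow> real \<Rightarrow> real) \<Rightarrow> (nat \<Rightarrow> real) \<Rightarrow> real" where
  "welfare N p C x = integral {0..total N x} p - (\<Sum>n<N. C n (x n))"

definition social_optimum :: "nat \<Rightarrow> (real \<Rightarrow> real) \<Rightarrow> (nat \<Rightarrow> real \<Rightarrow> real) \<Rightarrow> (nat \<Rightarrow> real) \<Rightarrow> bool" where
  "social_optimum N p C xS \<longleftrightarrow> nonneg_vec N xS \<and>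
     (\<forall>y. nonneg_vec N y \<longrightarrow> welfare N p C y \<le> welfare N p C xS)"

definition efficiency :: "nat \<Rightarrow> (real \<Rightarrow> real) \<Rightarrow> (nat \<Rightarrow> real \<Rightarrow> real) \<Rightarrow> (nat \<Rightarrow> real) \<Rightarrow> (nat \<Rightarrow> real) \<Rightarrow> real" where
  "efficiency N p C xS x = welfare N p C x / welfare N p C xS"

definition cournot_candidate :: "nat \<Rightarrow> (real \<Rightarrow> real) \<Rightarrow> (nat \<Rightarrow> real \<Rightarrow> real) \<Rightarrow> (nat \<Rightarrow> real) \<Rightarrow> bool" where
  "cournot_candidate N p C x \<longleftrightarrow> nonneg_vec N x \<and>
     (\<forall>n<N. (0 < x n \<longrightarrow> rderiv (C n) (x n) \<le> p (total N x) + x n * lderiv p (total N x)) \<and>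
            rderiv (C n) (x n) \<ge> p (total N x) + x n * rderiv p (total N x))"

definition phi :: "real \<Rightarrow> real" where
  "phi c = max ((2 - c + sqrt (c\<^sup>2 - 4 * c + 12)) / 2) 1"

definition f_bound :: "real \<Rightarrow> real" where
  "f_bound c = ((phi c)\<^sup>2 + 2) / ((phi c)\<^sup>2 + 2 * phi c + c)"

definition minC' :: "nat \<Rightarrow> (nat \<Rightarrow> real \<Rightarrow> real) \<Rightarrow> real \<Rightarrow> real" where
  "minC' N C q = Min ((\<lambda>n. rderiv (C n) q) ` {..<N})"

end

theory Submission
  imports Defs
begin


lemma div_swap: "(a - b)/(c - d) = (b - a)/((d::real) - c)"
  by (metis minus_diff_eq minus_divide_divide)

lemma slope3:
  fixes f :: "real \<Rightarrow> real"
  assumes cv: "convex_on {0..} f" and "0 \<le> a" "a < b" "b < c"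
  shows "(f b - f a)/(b-a) \<le> (f c - f a)/(c-a)"
    and "(f c - f a)/(c-a) \<le> (f c - f b)/(c-b)"
    and "(f b - f a)/(b-a) \<le> (f c - f b)/(c-b)"
proof -
  have cv': "convex_on {a..c} f" using convex_on_subset[OF cv] assms by auto
  have h: "f b \<le> (f c - f a) / (c - a) * (b - a) + f a"
    using convex_onD_Icc'[OF cv', of b] assms by auto
  show 1: "(f b - f a)/(b-a) \<le> (f c - f a)/(c-a)"
    using h assms by (simp add: field_simps)
  show 2: "(f c - f a)/(c-a) \<le> (f c - f b)/(c-b)"
  proof -
    define S where "S = (f c - f a)/(c-a)"
    have fc: "f c - f a = S * (c - a)" using assms by (simp add: S_def)
    have "f b - f a \<le> S * (b - a)" using h by (simp add: S_def)
    hence "S * (c - b) \<le> f c - f b" using fc by (simp add: algebra_simps)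
    thus ?thesis using assms by (simp add: S_def[symmetric] pos_le_divide_eq)
  qed
  show "(f b - f a)/(b-a) \<le> (f c - f b)/(c-b)" using 1 2 by linarith
qed

lemma rder_le_slope:
  fixes f :: "real \<Rightarrow> real"
  assumes cv: "convex_on {0..} f" and "0 \<le> a" "a < b"
    and D: "(f has_real_derivative D) (at a within {a..})"
  shows "D \<le> (f b - f a)/(b-a)"
proof -
  have "((\<lambda>y. (f y - f a) / (y - a)) \<longlongrightarrow> D) (at_right a)"
    using D unfolding has_field_derivative_iff at_within_Ici_at_right .
  moreover have "eventually (\<lambda>y. (f y - f a) / (y - a) \<le> (f b - f a)/(b-a)) (at_right a)"
    using assms by (intro eventually_at_rightI[of a b]) (auto intro: slope3(1)[OF cv])
  ultimately show ?thesis by (rule tendsto_upperbound) simp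
qed

lemma slope_le_lder:
  fixes f :: "real \<Rightarrow> real"
  assumes cv: "convex_on {0..} f" and "0 \<le> a" "a < b"
    and D: "(f has_real_derivative D) (at b within {..b})"
  shows "(f b - f a)/(b-a) \<le> D"
proof -
  have "((\<lambda>y. (f y - f b) / (y - b)) \<longlongrightarrow> D) (at_left b)"
    using D unfolding has_field_derivative_iff at_within_Iic_at_left .
  moreover have "eventually (\<lambda>y. (f b - f a)/(b-a) \<le> (f y - f b) / (y - b)) (at_left b)"
  proof (intro eventually_at_leftI[of a b])
    fix y assume y: "y \<in> {a<..<b}"
    have "(f b - f a)/(b-a) \<le> (f b - f y)/(b-y)" using slope3(2)[OF cv, of a y b] assms y by auto
    also have "(f b - f y)/(b-y) = (f y - f b) / (y - b)" by (rule div_swap)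
    finally show "(f b - f a)/(b-a) \<le> (f y - f b) / (y - b)" .
  qed (use assms in auto)
  ultimately show ?thesis by (rule tendsto_lowerbound) simp
qed

lemma lder_le_rder:
  fixes f :: "real \<Rightarrow> real"
  assumes cv: "convex_on {0..} f" and "0 < q"
    and Dl: "(f has_real_derivative Dl) (at q within {..q})"
    and Dr: "(f has_real_derivative Dr) (at q within {q..})"
  shows "Dl \<le> Dr"
proof -
  have bnd: "Dl \<le> (f z - f q)/(z-q)" if z: "z > q" for z
  proof -
    have "((\<lambda>y. (f y - f q) / (y - q)) \<longlongrightarrow> Dl) (at_left q)"
      using Dl unfolding has_field_derivative_iff at_within_Iic_at_left .
    moreover have "eventually (\<lambda>y. (f y - f q) / (y - q) \<le> (f z - f q)/(z-q)) (at_left q)"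
    proof (intro eventually_at_leftI[of 0 q])
      fix y assume y: "y \<in> {0<..<q}"
      have "(f q - f y)/(q-y) \<le> (f z - f q)/(z-q)" using slope3(3)[OF cv, of y q z] assms y z by auto
      also have "(f q - f y)/(q-y) = (f y - f q) / (y - q)" by (rule div_swap)
      finally show "(f y - f q) / (y - q) \<le> (f z - f q)/(z-q)" .
    qed (use assms in auto)
    ultimately show ?thesis by (rule tendsto_upperbound) simp
  qed
  have "((\<lambda>y. (f y - f q) / (y - q)) \<longlongrightarrow> Dr) (at_right q)"
    using Dr unfolding has_field_derivative_iff at_within_Ici_at_right .
  moreover have "eventually (\<lambda>y. Dl \<le> (f y - f q) / (y - q)) (at_right q)"
    using bnd by (intro eventually_at_rightI[of q "q+1"]) auto
  ultimately show ?thesis by (rule tendsto_lowerbound) simp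
qed

lemma rderiv_eq:
  assumes "(f has_real_derivative D) (at q within {q..})"
  shows "rderiv f q = D"
  unfolding rderiv_def
proof (rule the_equality)
  show "(f has_real_derivative D) (at q within {q..})" by fact
  fix E assume "(f has_real_derivative E) (at q within {q..})"
  thus "E = D" using has_field_derivative_unique[OF _ assms] by (simp add: at_within_Ici_at_right)
qed

lemma lderiv_eq:
  assumes "(f has_real_derivative D) (at q within {..q})"
  shows "lderiv f q = D"
  unfolding lderiv_def
proof (rule the_equality)
  show "(f has_real_derivative D) (at q within {..q})" by fact
  fix E assume "(f has_real_derivative E) (at q within {..q})"
  thus "E = D" using has_field_derivative_unique[OF _ assms] by (simp add: at_within_Iic_at_left)
qed


lemma conv_rsub:
  fixes f :: "real \<Rightarrow> real"
  assumes cv: "convex_on {0..} f" and "0 \<le> q" "q \<le> y"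
    and D: "(f has_real_derivative D) (at q within {q..})"
  shows "f y \<ge> f q + D * (y - q)"
proof (cases "q = y")
  case False
  hence "D \<le> (f y - f q)/(y-q)" using rder_le_slope[OF cv _ _ D] assms by auto
  thus ?thesis using False assms by (simp add: pos_le_divide_eq mult.commute)
qed simp

lemma conv_lsub:
  fixes f :: "real \<Rightarrow> real"
  assumes cv: "convex_on {0..} f" and "0 \<le> y" "y \<le> q"
    and D: "(f has_real_derivative D) (at q within {..q})"
  shows "f y \<ge> f q + D * (y - q)"
proof (cases "q = y")
  case False
  hence "(f q - f y)/(q-y) \<le> D" using slope_le_lder[OF cv _ _ D] assms by auto
  hence "f q - f y \<le> D * (q - y)" using False assms by (simp add: pos_divide_le_eq)
  thus ?thesis by (simp add: algebra_simps)
qed simp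

lemma rder_le_lder:
  fixes f :: "real \<Rightarrow> real"
  assumes cv: "convex_on {0..} f" and "0 \<le> a" "a < b"
    and Da: "(f has_real_derivative Da) (at a within {a..})"
    and Db: "(f has_real_derivative Db) (at b within {..b})"
  shows "Da \<le> Db"
  using rder_le_slope[OF cv assms(2,3) Da] slope_le_lder[OF cv assms(2,3) Db] by linarith

lemma exists_rderiv0:
  fixes f :: "real \<Rightarrow> real"
  assumes cv: "convex_on {0..} f" and mo: "mono_on {0..} f"
  shows "\<exists>D. (f has_real_derivative D) (at 0 within {0..})"
proof -
  define g where "g z = (f z - f 0) / (z - 0)" for z
  define L where "L = Inf (g ` {0<..})"
  have gnn: "0 \<le> g z" if "z > 0" for z
  proof -
    have "f 0 \<le> f z" using mo that by (auto intro: mono_onD)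
    thus ?thesis using that by (simp add: g_def)
  qed
  have bdd: "bdd_below (g ` {0<..})" using gnn by (auto intro!: bdd_belowI[of _ 0])
  have gmono: "g z \<le> g w" if "0 < z" "z < w" for z w
    using slope3(1)[OF cv, of 0 z w] that by (simp add: g_def)
  have "(g \<longlongrightarrow> L) (at_right 0)"
  proof (rule decreasing_tendsto)
    show "\<forall>\<^sub>F n in at_right 0. L \<le> g n"
      unfolding L_def using bdd by (intro eventually_at_rightI[of 0 1]) (auto intro!: cInf_lower)
    fix e assume "L < e"
    then obtain z where z: "z > 0" "g z < e" unfolding L_def
      using cInf_lessD[of "g ` {0<..}" e] by (auto simp: L_def)
    show "\<forall>\<^sub>F n in at_right 0. g n < e"
    proof (intro eventually_at_rightI[of 0 z])
      fix n assume "n \<in> {0<..<z}"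
      thus "g n < e" using gmono[of n z] z by auto
    qed (use z in auto)
  qed
  hence "(f has_real_derivative L) (at 0 within {0..})"
    unfolding has_field_derivative_iff at_within_Ici_at_right g_def by simp
  thus ?thesis by blast
qed

lemma lin_integral:
  fixes A B a b :: real
  assumes "a \<le> b"
  shows "((\<lambda>q. A + B*(q-a)) has_integral (A*(b-a) + B*(b-a)^2/2)) {a..b}"
proof -
  have "((\<lambda>q. A + B*(q-a)) has_integral ((\<lambda>q. A*(q-a) + B*(q-a)^2/2) b - (\<lambda>q. A*(q-a) + B*(q-a)^2/2) a)) {a..b}"
    by (rule fundamental_theorem_of_calculus[OF assms])
       (auto simp: has_real_derivative_iff_has_vector_derivative[symmetric] intro!: derivative_eq_intros)
  thus ?thesis by simp
qed

lemma int_upper: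
  fixes f :: "real \<Rightarrow> real"
  assumes "a \<le> b" "continuous_on {a..b} f" "\<And>q. q \<in> {a..b} \<Longrightarrow> f q \<le> A + B*(q-a)"
  shows "integral {a..b} f \<le> A*(b-a) + B*(b-a)^2/2"
  using has_integral_le[OF integrable_integral[OF integrable_continuous_interval[OF assms(2)]] lin_integral[OF assms(1)]] assms(3)
  by auto

lemma int_lower:
  fixes f :: "real \<Rightarrow> real"
  assumes "a \<le> b" "continuous_on {a..b} f" "\<And>q. q \<in> {a..b} \<Longrightarrow> f q \<ge> A + B*(q-a)"
  shows "integral {a..b} f \<ge> A*(b-a) + B*(b-a)^2/2"
  using has_integral_le[OF lin_integral[OF assms(1)] integrable_integral[OF integrable_continuous_interval[OF assms(2)]]] assms(3)
  by auto

lemma FL: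
  fixes x u v :: "nat \<Rightarrow> real"
  assumes N: "0 < N" and xnn: "\<And>n. n < N \<Longrightarrow> 0 \<le> x n"
    and unn: "\<And>n. n < N \<Longrightarrow> 0 \<le> u n" and vnn: "\<And>n. n < N \<Longrightarrow> 0 \<le> v n"
    and vx: "\<And>n. n < N \<Longrightarrow> v n \<le> x n"
    and l: "0 \<le> l" and c: "0 < c"
    and m_def: "m = Max (x ` {..<N})"
  shows "l * (\<Sum>n<N. x n * u n) - (\<Sum>n<N. x n * v n) - (l * (\<Sum>n<N. u n) - (\<Sum>n<N. v n))^2 / (2*c)
         \<le> m * ((\<Sum>n<N. x n) - m) + c * m^2 / 2"
proof -
  have fin: "finite (x ` {..<N})" "x ` {..<N} \<noteq> {}" using N by auto
  have xm: "x n \<le> m" if "n < N" for n using that m_def fin by auto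
  obtain k where k: "k < N" "m = x k" using Max_in[OF fin] m_def by auto
  have A: "(\<Sum>n<N. x n * u n) \<le> m * (\<Sum>n<N. u n)"
    unfolding sum_distrib_left by (intro sum_mono mult_right_mono xm unn) auto
  have "m * (\<Sum>n<N. v n) - (\<Sum>n<N. x n * v n) = (\<Sum>n<N. (m - x n) * v n)"
    by (simp add: sum_distrib_left sum_subtractf algebra_simps)
  also have "\<dots> \<le> (\<Sum>n<N. (m - x n) * x n)"
    by (intro sum_mono mult_left_mono vx) (auto simp: xm)
  also have "\<dots> = m * (\<Sum>n<N. x n) - (\<Sum>n<N. x n ^ 2)"
    by (simp add: sum_distrib_left sum_subtractf algebra_simps power2_eq_square)
  finally have B0: "m * (\<Sum>n<N. v n) - (\<Sum>n<N. x n * v n) \<le> m * (\<Sum>n<N. x n) - (\<Sum>n<N. x n ^ 2)" .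
  have "(\<Sum>n<N. x n ^ 2) \<ge> m^2"
    using member_le_sum[of k "{..<N}" "\<lambda>n. x n ^ 2"] k by auto
  hence B: "m * (\<Sum>n<N. v n) - (\<Sum>n<N. x n * v n) \<le> m * (\<Sum>n<N. x n) - m^2" using B0 by linarith
  define w where "w = l * (\<Sum>n<N. u n) - (\<Sum>n<N. v n)"
  have sq: "m * w - w^2/(2*c) \<le> c * m^2/2"
  proof -
    have "0 \<le> (w - c*m)^2 / (2*c)" using c by simp
    also have "(w - c*m)^2 / (2*c) = c * m^2/2 - (m * w - w^2/(2*c))"
      using c by (simp add: field_simps power2_eq_square)
    finally show ?thesis by simp
  qed
  have "l * (\<Sum>n<N. x n * u n) \<le> m * (l * (\<Sum>n<N. u n))"
    using mult_left_mono[OF A l] by (simp add: algebra_simps)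
  also have "m * (l * (\<Sum>n<N. u n)) = m * w + m * (\<Sum>n<N. v n)" unfolding w_def by (simp add: algebra_simps)
  finally have A': "l * (\<Sum>n<N. x n * u n) \<le> m * w + m * (\<Sum>n<N. v n)" .
  have "l * (\<Sum>n<N. x n * u n) - (\<Sum>n<N. x n * v n) - w^2 / (2*c) \<le> m * ((\<Sum>n<N. x n) - m) + c * m^2 / 2"
    using A' B sq by (simp add: algebra_simps power2_eq_square)
  thus ?thesis unfolding w_def .
qed

lemma SC:
  fixes c m X :: real
  assumes c: "1 \<le> c" and m: "0 \<le> m" "m \<le> X"
  defines "K \<equiv> (2 * phi c - 2 + c) / ((phi c)^2 + 2)"
  shows "m * (X - m) + c * m^2/2 \<le> K * (X^2/2 + m^2)" and "0 \<le> K"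
    and "f_bound c = 1 / (1 + K)"
proof -
  define r where "r = (2 - c + sqrt (c\<^sup>2 - 4 * c + 12)) / 2"
  have "c\<^sup>2 - 4 * c + 12 = (c-2)^2 + 8" by (simp add: power2_eq_square algebra_simps)
  hence disc: "0 \<le> c\<^sup>2 - 4 * c + 12" using zero_le_power2[of "c-2"] by linarith
  have sq: "(sqrt (c\<^sup>2 - 4 * c + 12))^2 = c\<^sup>2 - 4 * c + 12" using disc by simp
  have rq: "r^2 = (2 - c) * r + 2"
  proof -
    define S where "S = sqrt (c\<^sup>2 - 4 * c + 12)"
    have S2: "S^2 = (2-c)^2 + 8" using sq unfolding S_def by (simp add: power2_eq_square algebra_simps)
    have r: "r = (2 - c + S)/2" unfolding r_def S_def ..
    have "r^2 = ((2-c)^2 + 2*(2-c)*S + S^2)/4" unfolding r by (simp add: power2_eq_square field_simps)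
    also have "\<dots> = (2 - c) * r + 2" unfolding S2 r by (simp add: power2_eq_square field_simps)
    finally show ?thesis .
  qed
  have ph: "phi c = max r 1" unfolding phi_def r_def by simp
  have phpos: "phi c \<ge> 1" using ph by simp
  have den: "(phi c)^2 + 2 > 0" using zero_le_power2[of "phi c"] by linarith
  show "f_bound c = 1 / (1 + K)"
    unfolding f_bound_def K_def using den by (simp add: field_simps)
  show "0 \<le> K" unfolding K_def using phpos c den by (intro divide_nonneg_pos) auto
  show "m * (X - m) + c * m^2/2 \<le> K * (X^2/2 + m^2)"
  proof (cases "r \<ge> 1")
    case True
    hence pr: "phi c = r" using ph by simp
    have rpos: "r > 0" using True by simp
    have K: "K = 1 / r" unfolding K_def pr using rq rpos den pr
      by (simp add: field_simps power2_eq_square)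
    have "0 \<le> (X - r*m)^2" by simp
    also have "(X - r*m)^2 = X^2 - 2*r*m*X + m^2*r^2"
      by (simp add: power2_eq_square algebra_simps)
    also have "m^2*r^2 = m^2*(2 + 2*r - c*r)" unfolding rq by (simp add: algebra_simps)
    finally have h: "r * (2*m*X - 2*m^2 + c*m^2) \<le> X^2 + 2*m^2" by (simp add: algebra_simps)
    have e: "r * (m*(X-m) + c*m^2/2) = r * (2*m*X - 2*m^2 + c*m^2) / 2" by (simp add: algebra_simps power2_eq_square)
    have "r * (m*(X-m) + c*m^2/2) \<le> X^2/2 + m^2" using h unfolding e by linarith
    hence "m*(X-m) + c*m^2/2 \<le> (X^2/2+m^2)/r" using rpos by (simp add: pos_le_divide_eq mult.commute)
    thus ?thesis unfolding K by simp
  next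
    case False
    hence pr: "phi c = 1" using ph by simp
    have K: "K = c / 3" unfolding K_def pr by simp
    have c3: "c > 3"
    proof (rule ccontr)
      assume "\<not> c > 3"
      hence "sqrt (c\<^sup>2 - 4 * c + 12) \<ge> sqrt (c^2)"
        by (intro real_sqrt_le_mono) simp
      hence "sqrt (c\<^sup>2 - 4 * c + 12) \<ge> c" using c by simp
      thus False using False unfolding r_def by simp
    qed
    have "c*m \<le> c*X" using m c3 by (intro mult_left_mono) auto
    moreover have "0 \<le> m*(c-3)" using m c3 by auto
    ultimately have "0 \<le> c*X + c*m - 6*m" by (simp add: algebra_simps)
    hence "0 \<le> (X - m) * (c*X + c*m - 6*m)"
      using m by (intro mult_nonneg_nonneg) auto
    thus ?thesis unfolding K by (simp add: algebra_simps power2_eq_square)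
  qed
qed

theorem corollary2:
  fixes N :: nat and p :: "real \<Rightarrow> real" and C :: "nat \<Rightarrow> real \<Rightarrow> real"
    and x xS :: "nat \<Rightarrow> real"
  assumes N_pos: "0 < N"
    and A1_convex: "\<forall>n<N. convex_on {0..} (C n)"
    and A1_cont: "\<forall>n<N. continuous_on {0..} (C n)"
    and A1_mono: "\<forall>n<N. mono_on {0..} (C n)"
    and A1_diff: "\<forall>n<N. \<forall>q>0. (C n) differentiable (at q)"
    and A1_C1: "\<forall>n<N. continuous_on {0<..} (deriv (C n))"
    and A1_zero: "\<forall>n<N. C n 0 = 0"
    and A2_cont: "continuous_on {0..} p"
    and A2_nonneg: "\<forall>q\<ge>0. 0 \<le> p q"
    and A2_noninc: "antimono_on {0..} p"
    and A2_p0: "0 < p 0"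
    and A2_rderiv: "\<forall>q\<ge>0. \<exists>D. (p has_real_derivative D) (at q within {q..})"
    and A2_lderiv: "\<forall>q>0. \<exists>D. (p has_real_derivative D) (at q within {..q})"
    and A3: "\<exists>R>0. p R \<le> minC' N C 0"
    and A4: "p 0 > minC' N C 0"
    and p_convex: "convex_on {0..} p"
    and s_def: "s = Inf {q. 0 \<le> q \<and> p q = minC' N C 0}"
    and t_def: "t = Inf {q. 0 \<le> q \<and> minC' N C q \<ge> p q + q * rderiv p q}"
    and slope: "lderiv p s < 0"
    and cand: "cournot_candidate N p C x"
    and opt: "social_optimum N p C xS"
  shows "efficiency N p C xS x \<ge> f_bound (rderiv p t / lderiv p s)"
proof -
  have Cconv: "convex_on {0..} (C n)" if "n < N" for n using A1_convex that by auto
  have pmono: "p b \<le> p a" if "0 \<le> a" "a \<le> b" for a b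
    using monotone_onD[OF A2_noninc, of a b] that by auto
  have Cder: "\<exists>D. (C n has_real_derivative D) (at q)" if "n < N" "0 < q" for n q
    using A1_diff that by (meson real_differentiableE)
  have Crd: "(C n has_real_derivative rderiv (C n) q) (at q within {q..})" if n: "n < N" and q: "0 \<le> q" for n q
  proof -
    obtain D where D: "(C n has_real_derivative D) (at q within {q..})"
    proof (cases "q = 0")
      case True then show ?thesis using exists_rderiv0[OF Cconv[OF n]] A1_mono n that by auto
    next
      case False
      then obtain D where "(C n has_real_derivative D) (at q)" using Cder[OF n] q by fastforce
      then show ?thesis using has_field_derivative_at_within that by blast
    qed
    thus ?thesis using rderiv_eq[OF D] by simp
  qed
  have Cld: "(C n has_real_derivative rderiv (C n) q) (at q within {..q})" if n: "n < N" and q: "0 < q" for n q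
  proof -
    obtain D where D: "(C n has_real_derivative D) (at q)" using Cder[OF n q] by blast
    have "rderiv (C n) q = D" using rderiv_eq[OF has_field_derivative_at_within[OF D]] .
    thus ?thesis using has_field_derivative_at_within[OF D] by simp
  qed
  have prd: "(p has_real_derivative rderiv p q) (at q within {q..})" if "0 \<le> q" for q
    using A2_rderiv that rderiv_eq by blast
  have pld: "(p has_real_derivative lderiv p q) (at q within {..q})" if "0 < q" for q
    using A2_lderiv that lderiv_eq by blast
  have Csub: "C n y \<ge> C n a + rderiv (C n) a * (y - a)" if "n < N" "0 \<le> a" "0 \<le> y" for n a y
  proof (cases "a \<le> y")
    case True thus ?thesis using conv_rsub[OF Cconv[OF that(1)] _ _ Crd[OF that(1) that(2)]] that by auto
  next
    case False
    hence "0 < a" using that by auto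
    thus ?thesis using conv_lsub[OF Cconv[OF that(1)] _ _ Cld[OF that(1)]] False that by auto
  qed
  have Cmono: "rderiv (C n) a \<le> rderiv (C n) b" if "n < N" "0 \<le> a" "a \<le> b" for n a b
  proof (cases "a = b")
    case False
    hence "a < b" "0 < b" using that by auto
    thus ?thesis using rder_le_lder[OF Cconv[OF that(1)] that(2) _ Crd[OF that(1) that(2)] Cld[OF that(1)]] by auto
  qed simp
  have psr: "p y \<ge> p q + rderiv p q * (y - q)" if "0 \<le> q" "q \<le> y" for q y
    using conv_rsub[OF p_convex _ _ prd] that by auto
  have psl: "p y \<ge> p q + lderiv p q * (y - q)" if "0 \<le> y" "y \<le> q" "0 < q" for q y
    using conv_lsub[OF p_convex _ _ pld] that by auto
  have plr: "lderiv p q \<le> rderiv p q" if "0 < q" for q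
    using lder_le_rder[OF p_convex that pld prd] that by auto
  have prl: "rderiv p a \<le> lderiv p b" if "0 \<le> a" "a < b" for a b
    using rder_le_lder[OF p_convex that prd pld] that by auto
  have prnp: "rderiv p q \<le> 0" if "0 \<le> q" for q
  proof -
    have "rderiv p q \<le> (p (q+1) - p q)/((q+1) - q)" using rder_le_slope[OF p_convex that _ prd[OF that], of "q+1"] by simp
    also have "\<dots> \<le> 0" using pmono[of q "q+1"] that by simp
    finally show ?thesis .
  qed
  define m0 where "m0 = minC' N C 0"
  have fimg: "finite ((\<lambda>n. rderiv (C n) q) ` {..<N})" "(\<lambda>n. rderiv (C n) q) ` {..<N} \<noteq> {}" for q
    using N_pos by auto
  have minle: "minC' N C q \<le> rderiv (C n) q" if "n < N" for n q
    unfolding minC'_def using fimg that by auto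
  have minin: "\<exists>n<N. minC' N C q = rderiv (C n) q" for q
    unfolding minC'_def using Min_in[OF fimg(1) fimg(2), of q] by auto
  have Cge0: "rderiv (C n) q \<ge> m0" if "n < N" "0 \<le> q" for n q
    using minle[OF that(1), of 0] Cmono[OF that(1), of 0 q] that unfolding m0_def by auto
  define Sset where "Sset = {q. 0 \<le> q \<and> p q = m0}"
  have Sne: "Sset \<noteq> {}"
  proof -
    obtain R where R: "R > 0" "p R \<le> m0" using A3 m0_def by auto
    have "continuous_on {0..R} p" using continuous_on_subset[OF A2_cont] by auto
    then obtain q where "0 \<le> q" "q \<le> R" "p q = m0" using IVT2'[of p R m0 0] R A4 m0_def by auto
    thus ?thesis unfolding Sset_def by auto
  qed
  have Sclosed: "closed Sset"
  proof -
    have "Sset = {q \<in> {0..}. p q = m0}" unfolding Sset_def by auto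
    thus ?thesis using continuous_closed_preimage_constant[OF A2_cont] by auto
  qed
  have Sbdd: "bdd_below Sset" unfolding Sset_def by (auto intro!: bdd_belowI[of _ 0])
  have "s \<in> Sset" unfolding s_def m0_def[symmetric] Sset_def[symmetric]
    using closed_contains_Inf[OF Sne Sbdd Sclosed] .
  hence s0: "0 \<le> s" and ps: "p s = m0" unfolding Sset_def by auto
  have spos: "0 < s" using ps A4 s0 m0_def by (cases "s = 0") auto
  have ple: "p q \<le> m0" if "s \<le> q" for q using pmono[OF s0 that] ps by simp
  define d where "d = - lderiv p s"
  have dpos: "0 < d" using slope d_def by simp
  define X where "X = total N x"
  have Xsum: "X = (\<Sum>n<N. x n)" unfolding X_def total_def ..
  have xnn: "0 \<le> x n" if "n < N" for n using cand that unfolding cournot_candidate_def nonneg_vec_def by auto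
  have cup: "rderiv (C n) (x n) \<le> p X + x n * lderiv p X" if "n < N" "0 < x n" for n
    using cand that unfolding cournot_candidate_def X_def by auto
  have clo: "rderiv (C n) (x n) \<ge> p X + x n * rderiv p X" if "n < N" for n
    using cand that unfolding cournot_candidate_def X_def by auto
  have xle: "x n \<le> X" if "n < N" for n
    unfolding Xsum using member_le_sum[of n "{..<N}" x] xnn that by auto
  have X0: "0 \<le> X" unfolding Xsum using xnn by (auto intro: sum_nonneg)
  have Xpos: "0 < X"
  proof (rule ccontr)
    assume "\<not> 0 < X"
    hence X00: "X = 0" using X0 by simp
    hence xz: "x n = 0" if "n < N" for n using xle[OF that] xnn[OF that] by simp
    obtain n where n: "n < N" "minC' N C 0 = rderiv (C n) 0" using minin by blast
    have "rderiv (C n) 0 \<ge> p 0" using clo[OF n(1)] xz[OF n(1)] X00 by simp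
    thus False using A4 n by simp
  qed
  define Tset where "Tset = {q. 0 \<le> q \<and> minC' N C q \<ge> p q + q * rderiv p q}"
  have XT: "X \<in> Tset"
  proof -
    obtain n where n: "n < N" "minC' N C X = rderiv (C n) X" using minin by blast
    have "rderiv (C n) X \<ge> rderiv (C n) (x n)" using Cmono[OF n(1) xnn xle] n by auto
    moreover have "rderiv (C n) (x n) \<ge> p X + x n * rderiv p X" using clo n by auto
    moreover have "x n * rderiv p X \<ge> X * rderiv p X"
      using mult_right_mono_neg[OF xle[OF n(1)] prnp[OF X0]] .
    ultimately show ?thesis unfolding Tset_def using n X0 by auto
  qed
  have sT: "s/2 \<in> Tset"
  proof -
    obtain n where n: "n < N" "minC' N C (s/2) = rderiv (C n) (s/2)" using minin by blast
    have a: "rderiv (C n) (s/2) \<ge> p s" using Cge0[OF n(1)] ps s0 by auto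
    have "rderiv p (s/2) \<le> (p s - p (s/2))/(s - s/2)" using rder_le_slope[OF p_convex _ _ prd[of "s/2"], of s] spos by auto
    hence "(s/2) * rderiv p (s/2) \<le> (s/2) * ((p s - p (s/2))/(s - s/2))"
      using spos by (intro mult_left_mono) auto
    also have "\<dots> = p s - p (s/2)" using spos by (simp add: field_simps)
    finally show ?thesis unfolding Tset_def using n a s0 by auto
  qed
  have Tbdd: "bdd_below Tset" unfolding Tset_def by (auto intro!: bdd_belowI[of _ 0])
  have tX: "t \<le> X" unfolding t_def Tset_def[symmetric] using cInf_lower[OF XT Tbdd] .
  have ts: "t \<le> s/2" unfolding t_def Tset_def[symmetric] using cInf_lower[OF sT Tbdd] .
  have t0: "0 \<le> t" unfolding t_def Tset_def[symmetric] using XT by (intro cInf_greatest) (auto simp: Tset_def)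
  have tlts: "t < s" using ts spos by simp
  define al where "al = - lderiv p X"
  define be where "be = - rderiv p X"
  define bb where "bb = - rderiv p t"
  define P where "P = p X"
  have be0: "0 \<le> be" using prnp[OF X0] be_def by simp
  have albe: "be \<le> al" using plr[OF Xpos] al_def be_def by simp
  have bbbe: "be \<le> bb"
  proof (cases "t = X")
    case False
    hence "t < X" using tX by simp
    thus ?thesis using prl[OF t0 \<open>t < X\<close>] plr[OF Xpos] bb_def be_def by simp
  qed (simp add: bb_def be_def)
  have bbd: "d \<le> bb" using prl[OF t0 tlts] bb_def d_def by simp
  have bbpos: "0 < bb" using bbd dpos by simp
  define c where "c = rderiv p t / lderiv p s"
  have c_eq: "c = bb / d" unfolding c_def bb_def d_def by simp
  have c1: "1 \<le> c" unfolding c_eq using bbd dpos by simp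
  have cpos: "0 < c" using c1 by simp
  define ka where "ka = be / c"
  have ka0: "0 \<le> ka" unfolding ka_def using be0 cpos by simp
  have kad: "ka \<le> d"
  proof -
    have "be * d \<le> bb * d" using bbbe dpos by (intro mult_right_mono) auto
    thus ?thesis unfolding ka_def c_eq using dpos bbpos by (simp add: field_simps)
  qed
  have kaal: "ka \<le> al"
  proof -
    have "be / c \<le> be" using c1 be0 by (simp add: divide_le_eq mult_le_cancel_left1 mult_left_mono)
    thus ?thesis unfolding ka_def using albe by simp
  qed
  have contp: "continuous_on {a..b} p" if "0 \<le> a" for a b
    using continuous_on_subset[OF A2_cont] that by auto
  have intc: "integral {a..c'} p + integral {c'..b} p = integral {a..b} p" if "0 \<le> a" "a \<le> c'" "c' \<le> b" for a b c'
    using Henstock_Kurzweil_Integration.integral_combine[OF that(2,3) integrable_continuous_interval[OF contp[OF that(1), of b]]] .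
  have intX: "integral {0..X} p \<ge> P*X + al*X^2/2"
  proof -
    have "integral {0..X} p \<ge> (P + al*X)*(X-0) + (-al)*(X-0)^2/2"
    proof (rule int_lower[OF X0 contp])
      fix q assume q: "q \<in> {0..X}"
      have "p q \<ge> p X + lderiv p X * (q - X)" using psl[of q X] q Xpos by auto
      thus "p q \<ge> (P + al*X) + (-al)*(q-0)" unfolding P_def al_def by (simp add: algebra_simps)
    qed simp
    thus ?thesis by (simp add: algebra_simps power2_eq_square)
  qed
  have Cx: "C n (x n) \<le> (P - al * x n) * x n" if n: "n < N" for n
  proof (cases "x n = 0")
    case True thus ?thesis using A1_zero n by simp
  next
    case False
    hence xp: "0 < x n" using xnn[OF n] by simp
    have "C n 0 \<ge> C n (x n) + rderiv (C n) (x n) * (0 - x n)" using Csub[OF n xnn[OF n], of 0] by simp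
    hence "C n (x n) \<le> rderiv (C n) (x n) * x n" using A1_zero n by simp
    also have "\<dots> \<le> (P - al * x n) * x n" using cup[OF n xp] xp unfolding P_def al_def
      by (intro mult_right_mono) (auto simp: mult.commute)
    finally show ?thesis .
  qed
  have sumCx: "(\<Sum>n<N. C n (x n)) \<le> P * X - al * (\<Sum>n<N. x n ^ 2)"
  proof -
    have "(\<Sum>n<N. C n (x n)) \<le> (\<Sum>n<N. (P - al * x n) * x n)" by (intro sum_mono Cx) auto
    also have "\<dots> = P * X - al * (\<Sum>n<N. x n ^ 2)"
      unfolding Xsum by (simp add: algebra_simps sum_subtractf sum_distrib_left power2_eq_square)
    finally show ?thesis .
  qed
  have WXdef: "welfare N p C x = integral {0..X} p - (\<Sum>n<N. C n (x n))"
    unfolding welfare_def X_def ..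
  have xsq0: "0 \<le> (\<Sum>n<N. x n ^ 2)" by (intro sum_nonneg) auto
  have al0: "0 \<le> al" using albe be0 by simp
  have WX: "welfare N p C x \<ge> al * (X^2/2 + (\<Sum>n<N. x n ^ 2))"
    using WXdef intX sumCx by (simp add: algebra_simps)
  have WXpos: "welfare N p C x > 0"
  proof (cases "X < s")
    case True
    have "lderiv p X \<le> lderiv p s" using plr[OF Xpos] prl[OF X0 True] by simp
    hence "d \<le> al" unfolding d_def al_def by simp
    hence alp: "0 < al" using dpos by simp
    have "0 < al * (X^2/2 + (\<Sum>n<N. x n ^ 2))" using alp Xpos xsq0
      by (intro mult_pos_pos) (auto intro: add_pos_nonneg)
    thus ?thesis using WX by simp
  next
    case False
    hence sX: "s \<le> X" by simp
    have i1: "integral {0..s} p \<ge> (p s + d * s)*(s-0) + (-d)*(s-0)^2/2"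
    proof (rule int_lower[OF s0 contp])
      fix q assume q: "q \<in> {0..s}"
      have "p q \<ge> p s + lderiv p s * (q - s)" using psl[of q s] q spos by auto
      thus "p q \<ge> (p s + d * s) + (-d)*(q-0)" unfolding d_def by (simp add: algebra_simps)
    qed simp
    have i2: "integral {s..X} p \<ge> P*(X-s) + 0*(X-s)^2/2"
    proof (rule int_lower[OF sX contp[OF s0]])
      fix q assume q: "q \<in> {s..X}"
      thus "p q \<ge> P + 0*(q-s)" unfolding P_def using pmono[of q X] s0 by auto
    qed
    have psP: "P \<le> p s" unfolding P_def using pmono[OF s0 sX] .
    have "integral {0..X} p \<ge> P*X + d * s^2/2"
    proof -
      have "integral {0..X} p = integral {0..s} p + integral {s..X} p" using intc[of 0 s X] s0 sX by simp
      moreover have "p s * s \<ge> P * s" using psP s0 by (intro mult_right_mono) auto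
      ultimately show ?thesis using i1 i2 by (simp add: algebra_simps power2_eq_square)
    qed
    moreover have "0 < d * s^2/2" using dpos spos by simp
    moreover have "0 \<le> al * (\<Sum>n<N. x n ^ 2)" using al0 xsq0 by simp
    ultimately show ?thesis using WXdef sumCx by simp
  qed
  have intXZ: "integral {X..Z} p \<le> P*(Z-X) - d*(Z-X)^2/2" if Z: "X \<le> Z" "Z = X \<or> Z \<le> s" for Z
  proof -
    have "integral {X..Z} p \<le> P*(Z-X) + (-d)*(Z-X)^2/2"
    proof (rule int_upper[OF Z(1) contp[OF X0]])
      fix q assume q: "q \<in> {X..Z}"
      show "p q \<le> P + (-d)*(q - X)"
      proof (cases "q = X")
        case True thus ?thesis unfolding P_def by simp
      next
        case False
        hence qX: "X < q" "q \<le> s" using q Z by auto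
        hence Xs: "X < s" by simp
        have cv: "convex_on {X..s} p" using convex_on_subset[OF p_convex] X0 by auto
        have h: "p q \<le> (p s - p X) / (s - X) * (q - X) + p X"
          using convex_onD_Icc'[OF cv, of q] qX by auto
        have sl: "(p s - p X) / (s - X) \<le> lderiv p s" using slope_le_lder[OF p_convex X0 Xs pld[OF spos]] .
        have "(p s - p X) / (s - X) * (q - X) \<le> lderiv p s * (q - X)"
          using sl qX by (intro mult_right_mono) auto
        thus ?thesis using h unfolding P_def d_def by simp
      qed
    qed
    thus ?thesis by simp
  qed
  define m where "m = Max (x ` {..<N})"
  have finx: "finite (x ` {..<N})" "x ` {..<N} \<noteq> {}" using N_pos by auto
  obtain k where k: "k < N" "m = x k" using Max_in[OF finx] m_def by auto
  have m0': "0 \<le> m" using k xnn by simp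
  have mX: "m \<le> X" using k xle by simp
  have Wy: "welfare N p C y - welfare N p C x \<le> be * (m * (X - m) + c * m^2/2)" if ynn: "nonneg_vec N y" for y
  proof -
    define Y where "Y = total N y"
    have yn: "0 \<le> y n" if "n < N" for n using ynn that unfolding nonneg_vec_def by auto
    have Y0: "0 \<le> Y" unfolding Y_def total_def using yn by (auto intro: sum_nonneg)
    define u where "u n = max (y n - x n) 0" for n
    define v where "v n = max (x n - y n) 0" for n
    define T where "T = (\<Sum>n<N. u n)"
    define V where "V = (\<Sum>n<N. v n)"
    define A where "A = (\<Sum>n<N. x n * u n)"
    define B where "B = (\<Sum>n<N. x n * v n)"
    have YX: "Y - X = T - V"
    proof -
      have "Y - X = (\<Sum>n<N. y n - x n)" unfolding Y_def total_def Xsum by (simp add: sum_subtractf)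
      also have "\<dots> = (\<Sum>n<N. u n - v n)" unfolding u_def v_def by (intro sum.cong) auto
      finally show ?thesis unfolding T_def V_def by (simp add: sum_subtractf)
    qed
    have V0: "0 \<le> V" unfolding V_def v_def by (auto intro: sum_nonneg)
    have T0: "0 \<le> T" unfolding T_def u_def by (auto intro: sum_nonneg)
    have B0: "0 \<le> B" unfolding B_def v_def using xnn by (auto intro!: sum_nonneg)
    have costs: "(\<Sum>n<N. C n (y n) - C n (x n)) \<ge> l*(P*T - be*A) + m0*(1-l)*T - P*V + al*B"
      if l: "0 \<le> l" "l \<le> 1" for l
    proof -
      have per: "C n (y n) - C n (x n) \<ge> (P - be * x n) * (l * u n) + m0 * ((1-l) * u n) - (P - al * x n) * v n"
        if n: "n < N" for n
      proof -
        define r where "r = rderiv (C n) (x n)"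
        have sub: "C n (y n) - C n (x n) \<ge> r * (y n - x n)" using Csub[OF n xnn[OF n] yn[OF n]] r_def by simp
        show ?thesis
        proof (cases "x n \<le> y n")
          case True
          hence uv: "u n = y n - x n" "v n = 0" unfolding u_def v_def by auto
          have r1: "r \<ge> P - be * x n" using clo[OF n] unfolding r_def P_def be_def by (simp add: mult.commute)
          have r2: "r \<ge> m0" using Cge0[OF n xnn[OF n]] unfolding r_def .
          have "(P - be * x n) * (l * u n) \<le> r * (l * u n)" using r1 l uv True by (intro mult_right_mono) auto
          moreover have "m0 * ((1-l) * u n) \<le> r * ((1-l) * u n)" using r2 l uv True by (intro mult_right_mono) auto
          moreover have "r * (y n - x n) = r * (l * u n) + r * ((1-l) * u n)" unfolding uv(1) by (simp add: algebra_simps)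
          ultimately show ?thesis using sub uv by simp
        next
          case False
          hence uv: "u n = 0" "v n = x n - y n" unfolding u_def v_def by auto
          have xp: "0 < x n" using False yn[OF n] by simp
          have r1: "r \<le> P - al * x n" using cup[OF n xp] unfolding r_def P_def al_def by (simp add: mult.commute)
          have "r * v n \<le> (P - al * x n) * v n" using r1 uv False by (intro mult_right_mono) auto
          moreover have "r * (y n - x n) = - (r * v n)" unfolding uv(2) by (simp add: algebra_simps)
          ultimately show ?thesis using sub uv(1) by simp
        qed
      qed
      have "(\<Sum>n<N. C n (y n) - C n (x n)) \<ge> (\<Sum>n<N. (P - be * x n) * (l * u n) + m0 * ((1-l) * u n) - (P - al * x n) * v n)"
        using per by (intro sum_mono) auto
      also have "(\<Sum>n<N. (P - be * x n) * (l * u n) + m0 * ((1-l) * u n) - (P - al * x n) * v n)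
                 = l*(P*T - be*A) + m0*(1-l)*T - P*V + al*B"
        unfolding T_def V_def A_def B_def
        by (simp add: sum.distrib sum_subtractf sum_distrib_left algebra_simps)
      finally show ?thesis .
    qed
    have intb: "\<exists>l Y'. 0 \<le> l \<and> l \<le> 1 \<and> l*T - V = Y' - X \<and> (1-l)*T = Y - Y' \<and>
       integral {0..Y} p - integral {0..X} p \<le> P*(Y'-X) - ka*(Y'-X)^2/2 + m0*(Y - Y')"
    proof (cases "Y \<le> X")
      case True
      have "integral {Y..X} p \<ge> (P + al*(X-Y))*(X-Y) + (-al)*(X-Y)^2/2"
      proof (rule int_lower[OF True contp[OF Y0]])
        fix q assume q: "q \<in> {Y..X}"
        have "p q \<ge> p X + lderiv p X * (q - X)" using psl[of q X] q Xpos Y0 by auto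
        thus "p q \<ge> (P + al*(X-Y)) + (-al)*(q-Y)" unfolding P_def al_def by (simp add: algebra_simps)
      qed
      moreover have "(P + al*(X-Y))*(X-Y) + (-al)*(X-Y)^2/2 = P*(X-Y) + al*(X-Y)^2/2"
        by (simp add: power2_eq_square field_simps)
      ultimately have "integral {Y..X} p \<ge> P*(X-Y) + al*(X-Y)^2/2" by simp
      moreover have "integral {0..Y} p + integral {Y..X} p = integral {0..X} p" using intc[of 0 Y X] Y0 True by simp
      moreover have "ka*(X-Y)^2 \<le> al*(X-Y)^2" using kaal by (intro mult_right_mono) auto
      ultimately have "integral {0..Y} p - integral {0..X} p \<le> P*(Y-X) - ka*(Y-X)^2/2 + m0*(Y - Y)"
        by (simp add: algebra_simps power2_commute)
      thus ?thesis using YX by (intro exI[of _ 1] exI[of _ Y]) auto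
    next
      case False
      hence YgX: "X < Y" by simp
      have Tpos: "0 < T" using YX YgX V0 by simp
      show ?thesis
      proof (cases "Y \<le> s")
        case True
        have "integral {X..Y} p \<le> P*(Y-X) - d*(Y-X)^2/2" using intXZ[of Y] YgX True by simp
        moreover have "ka*(Y-X)^2 \<le> d*(Y-X)^2" using kad by (intro mult_right_mono) auto
        moreover have "integral {0..X} p + integral {X..Y} p = integral {0..Y} p" using intc[of 0 X Y] X0 YgX by simp
        ultimately have "integral {0..Y} p - integral {0..X} p \<le> P*(Y-X) - ka*(Y-X)^2/2 + m0*(Y - Y)"
          by simp
        thus ?thesis using YX by (intro exI[of _ 1] exI[of _ Y]) auto
      next
        case False
        define Y' where "Y' = max X s"
        have Y'1: "X \<le> Y'" "Y' \<le> Y" "s \<le> Y'" using False YgX unfolding Y'_def by auto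
        define l where "l = (Y' - X + V) / T"
        have l0: "0 \<le> l" unfolding l_def using Y'1 V0 Tpos by simp
        have l1: "l \<le> 1" unfolding l_def using Y'1 YX Tpos by simp
        have lT: "l * T = Y' - X + V" unfolding l_def using Tpos by simp
        have i1: "integral {X..Y'} p \<le> P*(Y'-X) - d*(Y'-X)^2/2" using intXZ[of Y'] Y'1 unfolding Y'_def by (cases "X \<le> s") (auto simp: max_def)
        have i2: "integral {Y'..Y} p \<le> m0*(Y-Y') + 0*(Y-Y')^2/2"
        proof (rule int_upper[OF Y'1(2) contp])
          show "0 \<le> Y'" using Y'1 X0 by simp
          fix q assume "q \<in> {Y'..Y}"
          thus "p q \<le> m0 + 0*(q-Y')" using ple Y'1 by auto
        qed
        have "integral {0..X} p + integral {X..Y} p = integral {0..Y} p" using intc[of 0 X Y] X0 YgX by simp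
        moreover have "integral {X..Y'} p + integral {Y'..Y} p = integral {X..Y} p" using intc[of X Y' Y] X0 Y'1 by simp
        moreover have "ka*(Y'-X)^2 \<le> d*(Y'-X)^2" using kad by (intro mult_right_mono) auto
        ultimately have "integral {0..Y} p - integral {0..X} p \<le> P*(Y'-X) - ka*(Y'-X)^2/2 + m0*(Y - Y')"
          using i1 i2 by simp
        moreover have "(1-l)*T = Y - Y'" using lT YX by (simp add: algebra_simps)
        ultimately show ?thesis using l0 l1 lT by (intro exI[of _ l] exI[of _ Y']) auto
      qed
    qed
    then obtain l Y' where lY: "0 \<le> l" "l \<le> 1" "l*T - V = Y' - X" "(1-l)*T = Y - Y'"
      and J: "integral {0..Y} p - integral {0..X} p \<le> P*(Y'-X) - ka*(Y'-X)^2/2 + m0*(Y - Y')" by blast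
    have Wdiff: "welfare N p C y - welfare N p C x
        = (integral {0..Y} p - integral {0..X} p) - (\<Sum>n<N. C n (y n) - C n (x n))"
      unfolding welfare_def Y_def X_def by (simp add: sum_subtractf)
    have "welfare N p C y - welfare N p C x \<le> P*(Y'-X) - ka*(Y'-X)^2/2 + m0*(Y - Y')
          - (l*(P*T - be*A) + m0*(1-l)*T - P*V + al*B)"
      using Wdiff J costs[OF lY(1,2)] by simp
    also have "\<dots> = - ka*(l*T - V)^2/2 + l*be*A - al*B"
      by (simp only: lY(3)[symmetric] lY(4)[symmetric]) (simp add: algebra_simps)
    also have "\<dots> \<le> - ka*(l*T - V)^2/2 + l*be*A - be*B"
      using albe B0 mult_right_mono by simp
    also have "\<dots> = be * (l * A - B - (l * T - V)^2 / (2*c))"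
      unfolding ka_def using cpos by (simp add: field_simps)
    also have "\<dots> \<le> be * (m * (X - m) + c * m^2/2)"
    proof (rule mult_left_mono[OF _ be0])
      show "l * A - B - (l * T - V)^2 / (2*c) \<le> m * (X - m) + c * m^2/2"
        using FL[OF N_pos xnn _ _ _ lY(1) cpos m_def, of u v] unfolding A_def B_def T_def V_def Xsum
        using xnn by (auto simp: u_def v_def yn)
    qed
    finally show ?thesis .
  qed
  define K where "K = (2 * phi c - 2 + c) / ((phi c)^2 + 2)"
  have SC1: "m * (X - m) + c * m^2/2 \<le> K * (X^2/2 + m^2)" and K0: "0 \<le> K" and fK: "f_bound c = 1 / (1 + K)"
    using SC[OF c1 m0' mX] unfolding K_def by auto
  have msq: "m^2 \<le> (\<Sum>n<N. x n ^ 2)" using member_le_sum[of k "{..<N}" "\<lambda>n. x n ^ 2"] k by auto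
  have "be * (m * (X - m) + c * m^2/2) \<le> be * (K * (X^2/2 + m^2))" using SC1 be0 by (rule mult_left_mono)
  also have "\<dots> \<le> al * (K * (X^2/2 + (\<Sum>n<N. x n ^ 2)))"
  proof -
    have "K * (X^2/2 + m^2) \<le> K * (X^2/2 + (\<Sum>n<N. x n ^ 2))" using msq K0 by (intro mult_left_mono) auto
    moreover have "0 \<le> K * (X^2/2 + m^2)" using K0 by simp
    ultimately show ?thesis using albe be0 by (meson mult_mono order_trans)
  qed
  also have "\<dots> \<le> K * welfare N p C x" using WX K0 by (simp add: mult.left_commute mult_left_mono)
  finally have key: "be * (m * (X - m) + c * m^2/2) \<le> K * welfare N p C x" .
  have WS: "welfare N p C xS \<le> (1 + K) * welfare N p C x"
    using Wy[of xS] opt key unfolding social_optimum_def by (simp add: algebra_simps)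
  have WSx: "welfare N p C x \<le> welfare N p C xS" using opt cand unfolding social_optimum_def cournot_candidate_def by auto
  have WSpos: "0 < welfare N p C xS" using WSx WXpos by simp
  have "1 / (1 + K) \<le> welfare N p C x / welfare N p C xS"
    using WS WSpos WXpos K0 by (simp add: field_simps)
  moreover have "f_bound (rderiv p t / lderiv p s) = 1/(1+K)" using fK c_def by simp
  ultimately show ?thesis unfolding efficiency_def by simp
qed

end
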